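(* Let $\varphi:\mathbb{M}(n)\to\mathbb{C}$ be a positive unital linear functional and let $A\in\mathbb{M}(n)$ be Hermitian. Put $B=A-\varphi(A)I$. Then $$\varphi(B^4)\le\frac{\operatorname{spd}(A)^4}{12}$$ and $$\varphi(B^2)\varphi(B^4)-\varphi(B^2)^3-\varphi(B^3)^2\le\frac{\operatorname{spd}(A)^6}{432}.$$
   Context: $\mathbb{M}(n)$ is the algebra of $n\times n$ complex matrices. A linear functional $\varphi$ on $\mathbb{M}(n)$ is positive if $\varphi(A)\ge0$ whenever $A$ is positive semidefinite, and unital if $\varphi(I)=1$. For $A$ with eigenvalues $\lambda_1,\dots,\lambda_n$, the spread is $\operatorname{spd}(A)=\max_{i,j}|\lambda_i-\lambda_j|$. *)

theory Defs
  imports "Jordan_Normal_Form.Spectral_Radius" "HOL-Library.Complex_Order"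
begin

definition hermitian_mat :: "nat \<Rightarrow> complex mat \<Rightarrow> bool" where
  "hermitian_mat n A \<longleftrightarrow> A \<in> carrier_mat n n \<and>
     (\<forall>i<n. \<forall>j<n. A $$ (i, j) = cnj (A $$ (j, i)))"

definition psd_mat :: "nat \<Rightarrow> complex mat \<Rightarrow> bool" where
  "psd_mat n A \<longleftrightarrow> hermitian_mat n A \<and>
     (\<forall>v \<in> carrier_vec n. 0 \<le> (\<Sum>i<n. cnj (v $ i) * (A *\<^sub>v v) $ i))"

definition pos_unital_functional :: "nat \<Rightarrow> (complex mat \<Rightarrow> complex) \<Rightarrow> bool" where
  "pos_unital_functional n \<phi> \<longleftrightarrow>
     (\<forall>X \<in> carrier_mat n n. \<forall>Y \<in> carrier_mat n n. \<phi> (X + Y) = \<phi> X + \<phi> Y) \<and>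
     (\<forall>c. \<forall>X \<in> carrier_mat n n. \<phi> (c \<cdot>\<^sub>m X) = c * \<phi> X) \<and>
     (\<forall>X. psd_mat n X \<longrightarrow> 0 \<le> \<phi> X) \<and>
     \<phi> (1\<^sub>m n) = 1"

definition spd :: "complex mat \<Rightarrow> real" where
  "spd A = Max {cmod (l - m) | l m. eigenvalue A l \<and> eigenvalue A m}"

end

theory Submission imports Defs begin

definition ip :: "nat \<Rightarrow> complex vec \<Rightarrow> complex vec \<Rightarrow> complex" where
  "ip n u w = (\<Sum>i<n. cnj (u $ i) * w $ i)"

lemma mv_index: assumes "X \<in> carrier_mat n n" "v \<in> carrier_vec n" "i < n"
  shows "(X *\<^sub>v v) $ i = (\<Sum>j<n. X $$ (i,j) * v $ j)"
  using assms by (auto simp: scalar_prod_def lessThan_atLeast0 intro!: sum.cong)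

lemma mm_index: assumes "X \<in> carrier_mat n n" "Y \<in> carrier_mat n n" "i < n" "j < n"
  shows "(X * Y) $$ (i,j) = (\<Sum>k<n. X $$ (i,k) * Y $$ (k,j))"
  using assms by (auto simp: scalar_prod_def lessThan_atLeast0 intro!: sum.cong)

lemma herm_ip: assumes H: "hermitian_mat n X" and u: "u \<in> carrier_vec n" and v: "v \<in> carrier_vec n"
  shows "ip n u (X *\<^sub>v v) = ip n (X *\<^sub>v u) v"
proof -
  have X: "X \<in> carrier_mat n n" using H by (simp add: hermitian_mat_def)
  have Xc: "\<And>i j. i<n \<Longrightarrow> j<n \<Longrightarrow> cnj (X $$ (j,i)) = X $$ (i,j)"
  proof -
    fix i j assume "i < n" "j < n"
    hence "X $$ (j,i) = cnj (X $$ (i,j))" using H unfolding hermitian_mat_def by blast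
    thus "cnj (X $$ (j,i)) = X $$ (i,j)" by simp
  qed
  have "ip n u (X *\<^sub>v v) = (\<Sum>i<n. \<Sum>j<n. cnj (u $ i) * X $$ (i,j) * v $ j)"
    unfolding ip_def by (rule sum.cong[OF refl]) (simp add: mv_index[OF X v] sum_distrib_left mult.assoc del: index_mult_mat_vec)
  also have "\<dots> = (\<Sum>j<n. \<Sum>i<n. cnj (u $ i) * X $$ (i,j) * v $ j)"
    by (rule sum.swap)
  also have "\<dots> = ip n (X *\<^sub>v u) v"
    unfolding ip_def
  proof (rule sum.cong[OF refl])
    fix j assume j: "j \<in> {..<n}"
    have "cnj ((X *\<^sub>v u) $ j) = (\<Sum>i<n. cnj (X $$ (j,i)) * cnj (u $ i))"
      using X u j by (simp add: mv_index[OF X u] del: index_mult_mat_vec)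
    also have "\<dots> = (\<Sum>i<n. cnj (u $ i) * X $$ (i,j))"
      using Xc j by (intro sum.cong) (auto simp: mult.commute)
    finally show "(\<Sum>i<n. cnj (u $ i) * X $$ (i, j) * v $ j) = cnj ((X *\<^sub>v u) $ j) * v $ j"
      by (simp add: sum_distrib_right)
  qed
  finally show ?thesis .
qed

lemma ip_cnj: "ip n u w = cnj (ip n w u)"
  unfolding ip_def by (simp add: mult.commute)

lemma ip_self: "ip n v v = complex_of_real (\<Sum>i<n. (cmod (v $ i))^2)"
  unfolding ip_def of_real_sum
proof (rule sum.cong)
  fix i show "cnj (v $ i) * v $ i = complex_of_real ((cmod (v $ i))^2)"
    by (subst complex_norm_square) simp
qed simp

lemma ip_self_zero: assumes "v \<in> carrier_vec n" "ip n v v = 0" shows "v = 0\<^sub>v n"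
proof -
  have "(\<Sum>i<n. (cmod (v $ i))^2) = 0" using assms(2) ip_self[of n v] by (simp del: of_real_sum)
  hence "\<forall>i\<in>{..<n}. (cmod (v $ i))^2 = 0" by (subst sum_nonneg_eq_0_iff[symmetric]) auto
  thus ?thesis using assms(1) by (intro eq_vecI) auto
qed

lemma ip_add_right: "u \<in> carrier_vec n \<Longrightarrow> w1 \<in> carrier_vec n \<Longrightarrow> w2 \<in> carrier_vec n \<Longrightarrow>
  ip n u (w1 + w2) = ip n u w1 + ip n u w2"
  unfolding ip_def by (simp add: distrib_left sum.distrib)
lemma ip_minus_right: "u \<in> carrier_vec n \<Longrightarrow> w1 \<in> carrier_vec n \<Longrightarrow> w2 \<in> carrier_vec n \<Longrightarrow>
  ip n u (w1 - w2) = ip n u w1 - ip n u w2"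
  unfolding ip_def by (simp add: right_diff_distrib sum_subtractf)
lemma ip_minus_left: "u1 \<in> carrier_vec n \<Longrightarrow> u2 \<in> carrier_vec n \<Longrightarrow> w \<in> carrier_vec n \<Longrightarrow>
  ip n (u1 - u2) w = ip n u1 w - ip n u2 w"
  unfolding ip_def by (simp add: left_diff_distrib sum_subtractf)
lemma ip_smult_right: "w \<in> carrier_vec n \<Longrightarrow> ip n u (c \<cdot>\<^sub>v w) = c * ip n u w"
  unfolding ip_def by (simp add: sum_distrib_left mult.left_commute)
lemma ip_smult_left: "u \<in> carrier_vec n \<Longrightarrow> ip n (c \<cdot>\<^sub>v u) w = cnj c * ip n u w"
  unfolding ip_def by (simp add: sum_distrib_left mult.assoc)

lemma herm_qf_real: assumes "hermitian_mat n X" "v \<in> carrier_vec n"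
  shows "ip n v (X *\<^sub>v v) = complex_of_real (Re (ip n v (X *\<^sub>v v)))"
proof -
  have "ip n v (X *\<^sub>v v) = cnj (ip n v (X *\<^sub>v v))"
    using herm_ip[OF assms(1) assms(2) assms(2)] ip_cnj[of n v "X *\<^sub>v v"] by simp
  hence "Im (ip n v (X *\<^sub>v v)) = 0" using arg_cong[of _ _ Im] by (metis cnj.sel(2) equal_neg_zero)
  thus ?thesis by (simp add: complex_eq_iff)
qed

section \<open>Polynomial evaluation at a matrix\<close>

lemma smult_one_mat[simp]: "(1::complex) \<cdot>\<^sub>m M = M" by (auto intro!: eq_matI)
lemma zero_smult_add[simp]: "M \<in> carrier_mat n n \<Longrightarrow> (0::complex) \<cdot>\<^sub>m 1\<^sub>m n + M = M"
  by (auto intro!: eq_matI)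

definition evm :: "nat \<Rightarrow> complex mat \<Rightarrow> complex poly \<Rightarrow> complex mat" where
  "evm n A p = foldr (\<lambda>a M. a \<cdot>\<^sub>m 1\<^sub>m n + A * M) (coeffs p) (0\<^sub>m n n)"

lemma evm_0[simp]: "evm n A 0 = 0\<^sub>m n n" by (simp add: evm_def)

lemma evm_pCons: assumes A: "A \<in> carrier_mat n n"
  shows "evm n A (pCons a p) = a \<cdot>\<^sub>m 1\<^sub>m n + A * evm n A p"
proof (cases "a = 0 \<and> p = 0")
  case True
  thus ?thesis using A by (auto intro!: eq_matI)
next
  case False
  hence "coeffs (pCons a p) = a # coeffs p" by (auto simp: cCons_def)
  thus ?thesis by (simp add: evm_def)
qed

lemma evm_carrier[simp]: assumes A: "A \<in> carrier_mat n n" shows "evm n A p \<in> carrier_mat n n"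
  by (induct p) (use A in \<open>auto simp: evm_pCons\<close>)

lemma evm_dim[simp]: assumes A: "A \<in> carrier_mat n n"
  shows "dim_row (evm n A p) = n" "dim_col (evm n A p) = n"
  using evm_carrier[OF A, of p] by auto

lemma evm_mv_carrier[simp]: "A \<in> carrier_mat n n \<Longrightarrow> v \<in> carrier_vec n \<Longrightarrow> evm n A p *\<^sub>v v \<in> carrier_vec n"
  by (meson evm_carrier mult_mat_vec_carrier)

lemma evm_add: assumes A: "A \<in> carrier_mat n n"
  shows "evm n A (p + q) = evm n A p + evm n A q"
proof (induct p arbitrary: q)
  case 0 thus ?case using A by simp
next
  case (pCons a p q)
  obtain b q' where q: "q = pCons b q'" by (cases q)
  have "evm n A (pCons a p + q) = (a + b) \<cdot>\<^sub>m 1\<^sub>m n + A * (evm n A p + evm n A q')"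
    using pCons(2) A by (simp add: q evm_pCons)
  also have "\<dots> = (a + b) \<cdot>\<^sub>m 1\<^sub>m n + (A * evm n A p + A * evm n A q')"
    using A by (subst mult_add_distrib_mat[OF A evm_carrier[OF A] evm_carrier[OF A]]) auto
  also have "\<dots> = evm n A (pCons a p) + evm n A q"
    using A by (auto simp: q evm_pCons algebra_simps intro!: eq_matI)
  finally show ?case .
qed

lemma evm_smult: assumes A: "A \<in> carrier_mat n n"
  shows "evm n A (Polynomial.smult c p) = c \<cdot>\<^sub>m evm n A p"
proof (induct p)
  case 0 thus ?case using A by simp
next
  case (pCons a p)
  have "evm n A (Polynomial.smult c (pCons a p)) = (c * a) \<cdot>\<^sub>m 1\<^sub>m n + A * (c \<cdot>\<^sub>m evm n A p)"
    using pCons(2) A by (simp add: evm_pCons)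
  also have "\<dots> = (c * a) \<cdot>\<^sub>m 1\<^sub>m n + c \<cdot>\<^sub>m (A * evm n A p)"
    using A by (subst mult_smult_distrib[OF A evm_carrier[OF A]]) auto
  also have "\<dots> = c \<cdot>\<^sub>m evm n A (pCons a p)"
    using A by (auto simp: evm_pCons algebra_simps intro!: eq_matI)
  finally show ?case .
qed

lemma evm_mult: assumes A: "A \<in> carrier_mat n n"
  shows "evm n A (p * q) = evm n A p * evm n A q"
proof (induct p)
  case 0 thus ?case using A by (simp add: left_mult_zero_mat[OF evm_carrier[OF A]])
next
  case (pCons a p)
  have "evm n A (pCons a p * q) = a \<cdot>\<^sub>m evm n A q + (0 \<cdot>\<^sub>m 1\<^sub>m n + A * (evm n A p * evm n A q))"
    using pCons(2) A by (simp add: evm_pCons evm_add evm_smult)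
  also have "\<dots> = a \<cdot>\<^sub>m evm n A q + A * evm n A p * evm n A q"
  proof -
    have "A * (evm n A p * evm n A q) \<in> carrier_mat n n" using A by (meson evm_carrier mult_carrier_mat)
    thus ?thesis by (simp add: assoc_mult_mat[OF A evm_carrier[OF A] evm_carrier[OF A]])
  qed
  also have "\<dots> = (a \<cdot>\<^sub>m 1\<^sub>m n + A * evm n A p) * evm n A q"
  proof -
    have c1: "a \<cdot>\<^sub>m 1\<^sub>m n \<in> carrier_mat n n" by simp
    have c2: "A * evm n A p \<in> carrier_mat n n" using A by simp
    show ?thesis
      by (subst add_mult_distrib_mat[OF c1 c2 evm_carrier[OF A]],
          subst mult_smult_assoc_mat[OF one_carrier_mat evm_carrier[OF A]]) (use A in simp)
  qed
  finally show ?case using A by (simp add: evm_pCons)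
qed

lemma evm_const: assumes A: "A \<in> carrier_mat n n" shows "evm n A [:a:] = a \<cdot>\<^sub>m 1\<^sub>m n"
  using A by (auto simp: evm_pCons intro!: eq_matI)

lemma evm_one: assumes A: "A \<in> carrier_mat n n" shows "evm n A 1 = 1\<^sub>m n"
  using evm_const[OF A, of 1] by (simp add: one_pCons)

lemma evm_X: assumes A: "A \<in> carrier_mat n n" shows "evm n A [:0,1:] = A"
  using A by (simp add: evm_pCons evm_const right_mult_one_mat)

lemma evm_comm: assumes A: "A \<in> carrier_mat n n"
  shows "evm n A p * evm n A q = evm n A q * evm n A p"
  using A by (simp add: evm_mult[symmetric] mult.commute)

lemma evm_diff: assumes A: "A \<in> carrier_mat n n"
  shows "evm n A (p - q) = evm n A p - evm n A q"
proof -
  have e: "p - q = p + Polynomial.smult (-1) q" by simp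
  have "evm n A (p - q) = evm n A p + (-1) \<cdot>\<^sub>m evm n A q"
    unfolding e by (simp only: evm_add[OF A] evm_smult[OF A])
  also have "\<dots> = evm n A p - evm n A q" using A by (auto intro!: eq_matI)
  finally show ?thesis .
qed

lemma evm_power: assumes A: "A \<in> carrier_mat n n"
  shows "evm n A (p ^ k) = evm n A p ^\<^sub>m k"
proof (induct k)
  case 0 thus ?case using A by (simp add: evm_one)
next
  case (Suc k)
  have e: "p ^ Suc k = p ^ k * p" by (simp add: mult.commute)
  show ?case unfolding e by (simp only: evm_mult[OF A] Suc(1) pow_mat.simps)
qed

section \<open>Real polynomials and Hermitian matrices\<close>

definition realp :: "complex poly \<Rightarrow> bool" where "realp p \<longleftrightarrow> (\<forall>k. Im (coeff p k) = 0)"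

lemma realp_add: "realp p \<Longrightarrow> realp q \<Longrightarrow> realp (p + q)" by (simp add: realp_def)
lemma realp_diff: "realp p \<Longrightarrow> realp q \<Longrightarrow> realp (p - q)" by (simp add: realp_def)
lemma realp_smult: "Im c = 0 \<Longrightarrow> realp p \<Longrightarrow> realp (Polynomial.smult c p)" by (simp add: realp_def)
lemma realp_const: "Im a = 0 \<Longrightarrow> realp [:a:]" by (auto simp: realp_def coeff_pCons split: nat.split)
lemma realp_X: "realp [:0,1:]" by (auto simp: realp_def coeff_pCons split: nat.split)
lemma realp_one: "realp 1" by (auto simp: realp_def coeff_1)
lemma realp_mult: "realp p \<Longrightarrow> realp q \<Longrightarrow> realp (p * q)"
  unfolding realp_def coeff_mult by (simp add: Im_sum)
lemma realp_power: "realp p \<Longrightarrow> realp (p ^ k)"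
  by (induct k) (auto simp: realp_one realp_mult)
lemma realp_pCons: "realp (pCons a p) \<Longrightarrow> Im a = 0 \<and> realp p"
  unfolding realp_def by (metis coeff_pCons_0 coeff_pCons_Suc)

lemma hermD: "hermitian_mat n X \<Longrightarrow> i < n \<Longrightarrow> j < n \<Longrightarrow> cnj (X $$ (i,j)) = X $$ (j,i)"
  unfolding hermitian_mat_def by (metis complex_cnj_cnj)

lemma hermI: "X \<in> carrier_mat n n \<Longrightarrow> (\<And>i j. i < n \<Longrightarrow> j < n \<Longrightarrow> cnj (X $$ (i,j)) = X $$ (j,i))
  \<Longrightarrow> hermitian_mat n X"
  unfolding hermitian_mat_def by (metis complex_cnj_cnj)

lemma herm_carrier: "hermitian_mat n X \<Longrightarrow> X \<in> carrier_mat n n"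
  unfolding hermitian_mat_def by blast

lemma herm_add: assumes "hermitian_mat n X" "hermitian_mat n Y" shows "hermitian_mat n (X + Y)"
proof (rule hermI)
  have X: "X \<in> carrier_mat n n" and Y: "Y \<in> carrier_mat n n" using assms herm_carrier by auto
  thus "X + Y \<in> carrier_mat n n" by simp
  fix i j assume i: "i < n" and j: "j < n"
  show "cnj ((X + Y) $$ (i,j)) = (X + Y) $$ (j,i)"
    using X Y i j hermD[OF assms(1) i j] hermD[OF assms(2) i j] by simp
qed

lemma herm_smult_one: "Im a = 0 \<Longrightarrow> hermitian_mat n (a \<cdot>\<^sub>m 1\<^sub>m n)"
  by (rule hermI) (auto simp: complex_eq_iff)

lemma herm_zero: "hermitian_mat n (0\<^sub>m n n)"
  by (rule hermI) auto

lemma herm_mult_comm: assumes hX: "hermitian_mat n X" and hY: "hermitian_mat n Y" and comm: "X * Y = Y * X"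
  shows "hermitian_mat n (X * Y)"
proof (rule hermI)
  have X: "X \<in> carrier_mat n n" and Y: "Y \<in> carrier_mat n n" using hX hY herm_carrier by auto
  thus "X * Y \<in> carrier_mat n n" by simp
  fix i j assume i: "i < n" and j: "j < n"
  have "cnj ((X * Y) $$ (i,j)) = (\<Sum>k<n. cnj (X $$ (i,k)) * cnj (Y $$ (k,j)))"
    by (simp add: mm_index[OF X Y i j] del: index_mult_mat)
  also have "\<dots> = (\<Sum>k<n. Y $$ (j,k) * X $$ (k,i))"
    by (rule sum.cong) (auto simp: hermD[OF hX] hermD[OF hY] i j)
  also have "\<dots> = (Y * X) $$ (j,i)"
    by (simp add: mm_index[OF Y X j i] del: index_mult_mat)
  finally show "cnj ((X * Y) $$ (i,j)) = (X * Y) $$ (j,i)" using comm by simp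
qed

lemma herm_evm: assumes hA: "hermitian_mat n A" and rp: "realp p"
  shows "hermitian_mat n (evm n A p)"
  using rp
proof (induct p)
  case 0 thus ?case by (simp add: herm_zero)
next
  case (pCons a p)
  have A: "A \<in> carrier_mat n n" using hA herm_carrier by auto
  from realp_pCons[OF pCons(3)] have a: "Im a = 0" and p: "realp p" by auto
  have hp: "hermitian_mat n (evm n A p)" using pCons(2)[OF p] .
  have comm: "A * evm n A p = evm n A p * A"
    using evm_comm[OF A, of "[:0,1:]" p] evm_X[OF A] by simp
  show ?case unfolding evm_pCons[OF A]
    by (rule herm_add[OF herm_smult_one[OF a] herm_mult_comm[OF hA hp comm]])
qed

lemma psd_evm: assumes hA: "hermitian_mat n A" and rx: "realp x" and rq: "realp q"
  and pos: "\<And>w. w \<in> carrier_vec n \<Longrightarrow> 0 \<le> ip n w (evm n A x *\<^sub>v w)"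
  shows "psd_mat n (evm n A (q * x * q))"
  unfolding psd_mat_def
proof (intro conjI ballI)
  have A: "A \<in> carrier_mat n n" using hA herm_carrier by auto
  show "hermitian_mat n (evm n A (q * x * q))"
    by (rule herm_evm[OF hA realp_mult[OF realp_mult[OF rq rx] rq]])
  fix v :: "complex vec" assume v: "v \<in> carrier_vec n"
  let ?Q = "evm n A q" and ?X = "evm n A x"
  have hQ: "hermitian_mat n ?Q" by (rule herm_evm[OF hA rq])
  have "evm n A (q * x * q) *\<^sub>v v = ?Q *\<^sub>v (?X *\<^sub>v (?Q *\<^sub>v v))"
  proof -
    have QX: "?Q * ?X \<in> carrier_mat n n" using A by (meson evm_carrier mult_carrier_mat)
    have "evm n A (q * x * q) *\<^sub>v v = (?Q * ?X) *\<^sub>v (?Q *\<^sub>v v)"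
      unfolding evm_mult[OF A] by (rule assoc_mult_mat_vec[OF QX evm_carrier[OF A] v])
    also have "\<dots> = ?Q *\<^sub>v (?X *\<^sub>v (?Q *\<^sub>v v))"
      by (rule assoc_mult_mat_vec[OF evm_carrier[OF A] evm_carrier[OF A]]) (use A v in simp)
    finally show ?thesis .
  qed
  hence "(\<Sum>i<n. cnj (v $ i) * (evm n A (q * x * q) *\<^sub>v v) $ i) = ip n v (?Q *\<^sub>v (?X *\<^sub>v (?Q *\<^sub>v v)))"
    by (simp add: ip_def)
  also have "\<dots> = ip n (?Q *\<^sub>v v) (?X *\<^sub>v (?Q *\<^sub>v v))"
    by (rule herm_ip[OF hQ v]) (use A v in simp)
  finally show "0 \<le> (\<Sum>i<n. cnj (v $ i) * (evm n A (q * x * q) *\<^sub>v v) $ i)"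
    using pos[of "?Q *\<^sub>v v"] A v by simp
qed

section \<open>Spectral bound\<close>

lemma smult_mat_vec: assumes "X \<in> carrier_mat n n" "v \<in> carrier_vec n"
  shows "(k \<cdot>\<^sub>m X) *\<^sub>v v = k \<cdot>\<^sub>v (X *\<^sub>v v)"
proof -
  have kX: "k \<cdot>\<^sub>m X \<in> carrier_mat n n" using assms by simp
  show ?thesis using assms
    by (intro eq_vecI) (auto simp: mv_index[OF kX assms(2)] mv_index[OF assms] sum_distrib_left mult.assoc simp del: index_mult_mat_vec)
qed

lemma ip_self_ge: "0 \<le> Re (ip n v v)"
  unfolding ip_self by (simp add: sum_nonneg)

lemma cs_herm: assumes hW: "hermitian_mat n W" and v: "v \<in> carrier_vec n"
  shows "(Re (ip n v (W *\<^sub>v v)))^2 \<le> Re (ip n v v) * Re (ip n v ((W * W) *\<^sub>v v))"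
proof -
  have W: "W \<in> carrier_mat n n" using hW herm_carrier by auto
  define a where "a = Re (ip n v (W *\<^sub>v v))"
  define N where "N = Re (ip n v v)"
  define Q where "Q = Re (ip n v ((W * W) *\<^sub>v v))"
  have Wv: "W *\<^sub>v v \<in> carrier_vec n" using W v by simp
  have e1: "ip n (W *\<^sub>v v) (W *\<^sub>v v) = ip n v ((W * W) *\<^sub>v v)"
    using herm_ip[OF hW v Wv] W v by simp
  have e2: "ip n (W *\<^sub>v v) v = ip n v (W *\<^sub>v v)"
    using herm_ip[OF hW v v] by simp
  have key: "0 \<le> Q - 2 * k * a + k^2 * N" for k :: real
  proof -
    let ?w = "W *\<^sub>v v - complex_of_real k \<cdot>\<^sub>v v"
    have kv: "complex_of_real k \<cdot>\<^sub>v v \<in> carrier_vec n" using v by simp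
    have "ip n ?w ?w = ip n (W *\<^sub>v v) (W *\<^sub>v v) - of_real k * ip n (W *\<^sub>v v) v
        - of_real k * ip n v (W *\<^sub>v v) + of_real k * of_real k * ip n v v"
      using Wv v kv
      by (simp add: ip_minus_left ip_minus_right ip_smult_left ip_smult_right algebra_simps)
    also have "\<dots> = ip n v ((W * W) *\<^sub>v v) - 2 * of_real k * ip n v (W *\<^sub>v v) + of_real (k^2) * ip n v v"
      unfolding e1 e2 by (simp add: algebra_simps power2_eq_square)
    finally have "Re (ip n ?w ?w) = Q - 2 * k * a + k^2 * N"
      unfolding Q_def a_def N_def by simp
    thus ?thesis using ip_self_ge[of n ?w] by simp
  qed
  have N0: "0 \<le> N" unfolding N_def by (rule ip_self_ge)
  show ?thesis
  proof (cases "N = 0")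
    case True
    have "a = 0"
    proof (rule ccontr)
      assume a: "a \<noteq> 0"
      have "0 \<le> Q - 2 * ((Q + 1) / (2 * a)) * a" using key[of "(Q + 1) / (2 * a)"] True by simp
      also have "\<dots> = -1" using a by (simp add: field_simps)
      finally show False by simp
    qed
    thus ?thesis using True unfolding a_def[symmetric] N_def[symmetric] Q_def[symmetric] by simp
  next
    case False
    hence Np: "N > 0" using N0 by simp
    have "0 \<le> Q - 2 * (a / N) * a + (a / N)^2 * N" by (rule key)
    also have "\<dots> = (N * Q - a^2) / N" using Np by (simp add: field_simps power2_eq_square)
    finally have "0 \<le> N * Q - a^2" using Np by (simp add: zero_le_divide_iff)
    thus ?thesis unfolding a_def[symmetric] N_def[symmetric] Q_def[symmetric] by simp
  qed
qed

lemma qf_bound: assumes M: "M \<in> carrier_mat n n" and nb: "norm_bound M c" and v: "v \<in> carrier_vec n"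
  shows "Re (ip n v (M *\<^sub>v v)) \<le> c * (\<Sum>i<n. cmod (v $ i))^2"
proof -
  let ?S = "\<Sum>i<n. cmod (v $ i)"
  have Mb: "\<And>i j. i < n \<Longrightarrow> j < n \<Longrightarrow> cmod (M $$ (i,j)) \<le> c"
    using nb M unfolding norm_bound_def by auto
  have row: "cmod ((M *\<^sub>v v) $ i) \<le> c * ?S" if i: "i < n" for i
  proof -
    have "cmod ((M *\<^sub>v v) $ i) \<le> (\<Sum>j<n. cmod (M $$ (i,j) * v $ j))"
      unfolding mv_index[OF M v i] by (rule norm_sum)
    also have "\<dots> \<le> (\<Sum>j<n. c * cmod (v $ j))"
      by (rule sum_mono) (auto simp: norm_mult intro!: mult_right_mono Mb i)
    finally show ?thesis by (simp add: sum_distrib_left)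
  qed
  have "Re (ip n v (M *\<^sub>v v)) \<le> cmod (ip n v (M *\<^sub>v v))" by (rule complex_Re_le_cmod)
  also have "\<dots> \<le> (\<Sum>i<n. cmod (cnj (v $ i) * (M *\<^sub>v v) $ i))"
    unfolding ip_def by (rule norm_sum)
  also have "\<dots> \<le> (\<Sum>i<n. cmod (v $ i) * (c * ?S))"
    by (rule sum_mono) (auto simp: norm_mult intro!: mult_left_mono row)
  also have "\<dots> = ?S * (c * ?S)" by (simp only: sum_distrib_right[symmetric])
  also have "\<dots> = c * ?S^2" by (simp add: power2_eq_square)
  finally show ?thesis .
qed

lemma herm_smult: assumes a: "Im a = 0" and hX: "hermitian_mat n X" shows "hermitian_mat n (a \<cdot>\<^sub>m X)"
proof (rule hermI)
  have X: "X \<in> carrier_mat n n" using hX herm_carrier by auto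
  thus "a \<cdot>\<^sub>m X \<in> carrier_mat n n" by simp
  fix i j assume i: "i < n" and j: "j < n"
  have "cnj a = a" using a by (simp add: complex_eq_iff)
  thus "cnj ((a \<cdot>\<^sub>m X) $$ (i,j)) = (a \<cdot>\<^sub>m X) $$ (j,i)"
    using X i j hermD[OF hX i j] by simp
qed

lemma spec_bound:
  fixes Z :: "complex mat"
  assumes hZ: "hermitian_mat n Z" and n: "0 < n"
    and ev: "\<And>\<mu>. eigenvalue Z \<mu> \<Longrightarrow> cmod \<mu> \<le> h" and v: "v \<in> carrier_vec n"
  shows "Re (ip n v (Z *\<^sub>v v)) \<le> h * Re (ip n v v)"
proof -
  have Z: "Z \<in> carrier_mat n n" using hZ herm_carrier by auto
  define N where "N = Re (ip n v v)"
  define q where "q = Re (ip n v (Z *\<^sub>v v))"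
  have N0: "0 \<le> N" unfolding N_def by (rule ip_self_ge)
  obtain \<mu>0 where "eigenvalue Z \<mu>0" using spectrum_non_empty[OF Z n] unfolding spectrum_def by auto
  hence h0: "0 \<le> h" using ev[of \<mu>0] norm_ge_zero order_trans by blast
  show ?thesis
  proof (cases "N = 0")
    case True
    have "ip n v v = of_real N" unfolding N_def ip_self by simp
    hence "v = 0\<^sub>v n" using ip_self_zero[OF v] True by simp
    hence "q = 0" unfolding q_def ip_def using Z by simp
    thus ?thesis using True unfolding q_def N_def by simp
  next
    case False
    hence Np: "0 < N" using N0 by simp
    have "q / N \<le> h"
    proof (rule dense_ge)
      fix r assume hr: "h < r"
      hence r: "0 < r" using h0 by simp
      define Y where "Y = complex_of_real (1/r) \<cdot>\<^sub>m Z"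
      have Yc: "Y \<in> carrier_mat n n" using Z unfolding Y_def by simp
      have hY: "hermitian_mat n Y" unfolding Y_def by (rule herm_smult[OF _ hZ]) simp
      have evY: "cmod \<mu> < 1" if "eigenvalue Y \<mu>" for \<mu>
      proof -
        from that obtain w where w: "w \<in> carrier_vec n" "w \<noteq> 0\<^sub>v n" "Y *\<^sub>v w = \<mu> \<cdot>\<^sub>v w"
          unfolding eigenvalue_def eigenvector_def using Yc by auto
        have ZY: "Z = complex_of_real r \<cdot>\<^sub>m Y" unfolding Y_def using r Z by (auto intro!: eq_matI)
        have "Z *\<^sub>v w = complex_of_real r \<cdot>\<^sub>v (Y *\<^sub>v w)" unfolding ZY by (rule smult_mat_vec[OF Yc w(1)])
        also have "\<dots> = (complex_of_real r * \<mu>) \<cdot>\<^sub>v w" unfolding w(3) by (simp add: smult_smult_assoc)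
        finally have "eigenvalue Z (of_real r * \<mu>)" unfolding eigenvalue_def eigenvector_def using w Z by auto
        hence "cmod (of_real r * \<mu>) \<le> h" by (rule ev)
        hence "r * cmod \<mu> \<le> h" using r by (simp add: norm_mult)
        hence "r * cmod \<mu> < r * 1" using hr by linarith
        thus ?thesis using r by (simp only: mult_less_cancel_left_pos)
      qed
      have "spectral_radius Y < 1"
      proof -
        from spectral_radius_mem_max(1)[OF Yc n] obtain \<mu> where "\<mu> \<in> spectrum Y" "spectral_radius Y = norm \<mu>" by auto
        thus ?thesis using evY unfolding spectrum_def by auto
      qed
      then obtain c where bd: "\<And>k. norm_bound (Y ^\<^sub>m k) c"
        using spectral_radius_jnf_norm_bound_less_1_upper_triangular[OF Yc] by blast
      define b where "b j = Re (ip n v ((Y ^\<^sub>m j) *\<^sub>v v)) / N" for j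
      define K where "K = c * (\<Sum>i<n. cmod (v$i))^2 / N"
      have powY: "Y ^\<^sub>m j = evm n Y ([:0,1:] ^ j)" for j
        using evm_power[OF Yc] evm_X[OF Yc] by simp
      have hYj: "hermitian_mat n (Y ^\<^sub>m j)" for j
        unfolding powY by (rule herm_evm[OF hY realp_power[OF realp_X]])
      have sqY: "Y ^\<^sub>m j * Y ^\<^sub>m j = Y ^\<^sub>m (2*j)" for j
        unfolding powY evm_mult[OF Yc, symmetric] by (simp add: power_add[symmetric] mult_2)
      have cs: "(b j)^2 \<le> b (2*j)" for j
      proof -
        have "(Re (ip n v ((Y ^\<^sub>m j) *\<^sub>v v)))^2 \<le> N * Re (ip n v ((Y ^\<^sub>m (2*j)) *\<^sub>v v))"
          using cs_herm[OF hYj v] sqY unfolding N_def by simp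
        hence "(Re (ip n v ((Y ^\<^sub>m j) *\<^sub>v v)))^2 / N^2 \<le> N * Re (ip n v ((Y ^\<^sub>m (2*j)) *\<^sub>v v)) / N^2"
          using Np by (intro divide_right_mono) auto
        thus ?thesis unfolding b_def using Np by (simp add: power2_eq_square power_divide)
      qed
      have bK: "b j \<le> K" for j
        unfolding b_def K_def using qf_bound[OF _ bd v] Np Yc by (simp add: divide_right_mono)
      have chain: "\<bar>b 1\<bar> ^ (2^(Suc k)) \<le> b (2^(Suc k))" for k
      proof (induct k)
        case 0 thus ?case using cs[of 1] by simp
      next
        case (Suc k)
        have "\<bar>b 1\<bar> ^ (2^(Suc (Suc k))) = (\<bar>b 1\<bar> ^ (2^(Suc k)))^2"
          by (simp add: power_mult[symmetric] mult.commute)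
        also have "\<dots> \<le> (b (2^(Suc k)))^2" using Suc by (intro power_mono) auto
        also have "\<dots> \<le> b (2 * 2^(Suc k))" by (rule cs)
        finally show ?case by simp
      qed
      have b1: "b 1 \<le> 1"
      proof (rule ccontr)
        assume "\<not> b 1 \<le> 1"
        hence x: "0 < b 1 - 1" by simp
        obtain k where k: "K < of_nat k * (b 1 - 1)" using reals_Archimedean3[OF x] by blast
        have "1 + of_nat (2^(Suc k)) * (b 1 - 1) \<le> (1 + (b 1 - 1)) ^ (2^(Suc k))"
          by (rule Bernoulli_inequality) (use x in simp)
        also have "\<dots> = \<bar>b 1\<bar> ^ (2^(Suc k))" using x by simp
        also have "\<dots> \<le> K" using chain[of k] bK[of "2^Suc k"] by linarith
        finally have "of_nat (2^(Suc k)) * (b 1 - 1) < K" by simp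
        moreover have "real k \<le> real (2^(Suc k))"
        proof -
          have "k < 2^k" by (rule less_exp)
          also have "(2::nat)^k \<le> 2^Suc k" by simp
          finally have "k \<le> 2^Suc k" by simp
          thus ?thesis by (simp only: of_nat_le_iff)
        qed
        hence "of_nat k * (b 1 - 1) \<le> of_nat (2^(Suc k)) * (b 1 - 1)"
          using x by (intro mult_right_mono) simp_all
        ultimately show False using k by simp
      qed
      have e: "b 1 = q / r / N"
      proof -
        have "Y ^\<^sub>m 1 = Y" using Yc by simp
        moreover have "Y *\<^sub>v v = complex_of_real (1/r) \<cdot>\<^sub>v (Z *\<^sub>v v)" unfolding Y_def by (rule smult_mat_vec[OF Z v])
        ultimately show ?thesis unfolding b_def q_def using v Z by (simp add: ip_smult_right)
      qed
      have "q / N = r * b 1" using e r by (simp add: field_simps)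
      also have "\<dots> \<le> r * 1" using b1 r by (intro mult_left_mono) auto
      finally show "q / N \<le> r" by simp
    qed
    thus ?thesis using Np unfolding q_def N_def by (simp add: field_simps)
  qed
qed

section \<open>Eigenvalue facts\<close>

lemma eig_real: assumes hA: "hermitian_mat n A" and e: "eigenvalue A l" shows "Im l = 0"
proof -
  have A: "A \<in> carrier_mat n n" using hA herm_carrier by auto
  from e obtain v where v: "v \<in> carrier_vec n" "v \<noteq> 0\<^sub>v n" "A *\<^sub>v v = l \<cdot>\<^sub>v v"
    unfolding eigenvalue_def eigenvector_def using A by auto
  have "ip n v (A *\<^sub>v v) = ip n (A *\<^sub>v v) v" by (rule herm_ip[OF hA v(1) v(1)])
  hence "l * ip n v v = cnj l * ip n v v" unfolding v(3) using v(1) by (simp add: ip_smult_right ip_smult_left)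
  moreover have "ip n v v \<noteq> 0" using ip_self_zero[OF v(1)] v(2) by auto
  ultimately have "l = cnj l" by simp
  thus ?thesis by (metis cnj.sel(2) equal_neg_zero)
qed

lemma eig_sq: fixes X :: "complex mat" assumes X: "X \<in> carrier_mat n n" and e: "eigenvalue (X * X) l"
  shows "\<exists>\<mu>. eigenvalue X \<mu> \<and> l = \<mu>^2"
proof -
  from e obtain w where w: "w \<in> carrier_vec n" "w \<noteq> 0\<^sub>v n" "(X * X) *\<^sub>v w = l \<cdot>\<^sub>v w"
    unfolding eigenvalue_def eigenvector_def using X by auto
  define m where "m = csqrt l"
  have mm: "m * m = l" unfolding m_def by (metis power2_csqrt power2_eq_square)
  define w' where "w' = X *\<^sub>v w + m \<cdot>\<^sub>v w"
  have w'c: "w' \<in> carrier_vec n" unfolding w'_def using X w by simp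
  have XXw: "X *\<^sub>v (X *\<^sub>v w) = l \<cdot>\<^sub>v w" using w(3) X w(1) by simp
  have "X *\<^sub>v w' = X *\<^sub>v (X *\<^sub>v w) + X *\<^sub>v (m \<cdot>\<^sub>v w)"
    unfolding w'_def by (rule mult_add_distrib_mat_vec[OF X]) (use X w in simp_all)
  also have "\<dots> = l \<cdot>\<^sub>v w + m \<cdot>\<^sub>v (X *\<^sub>v w)" unfolding XXw mult_mat_vec[OF X w(1)] ..
  also have "\<dots> = m \<cdot>\<^sub>v w'" unfolding w'_def mm[symmetric] using X w
    by (intro eq_vecI) (auto simp: algebra_simps)
  finally have Xw': "X *\<^sub>v w' = m \<cdot>\<^sub>v w'" .
  show ?thesis
  proof (cases "w' = 0\<^sub>v n")
    case True
    have "X *\<^sub>v w = (- m) \<cdot>\<^sub>v w"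
    proof (rule eq_vecI)
      fix i assume i: "i < dim_vec ((- m) \<cdot>\<^sub>v w)"
      hence "w' $ i = 0" using True w by simp
      thus "(X *\<^sub>v w) $ i = ((- m) \<cdot>\<^sub>v w) $ i" using i w X unfolding w'_def
        by (simp add: add_eq_0_iff2)
    qed (use X w in simp)
    hence "eigenvalue X (- m)" unfolding eigenvalue_def eigenvector_def using w X by auto
    thus ?thesis using mm by (intro exI[of _ "- m"]) (simp add: power2_eq_square)
  next
    case False
    hence "eigenvalue X m" unfolding eigenvalue_def eigenvector_def using w'c Xw' X by auto
    thus ?thesis using mm by (intro exI[of _ m]) (simp add: power2_eq_square)
  qed
qed

lemma eig_shift: assumes A: "A \<in> carrier_mat n n" and e: "eigenvalue (A - a \<cdot>\<^sub>m 1\<^sub>m n) \<mu>"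
  shows "eigenvalue A (\<mu> + a)"
proof -
  from e obtain w where w: "w \<in> carrier_vec n" "w \<noteq> 0\<^sub>v n" "(A - a \<cdot>\<^sub>m 1\<^sub>m n) *\<^sub>v w = \<mu> \<cdot>\<^sub>v w"
    unfolding eigenvalue_def eigenvector_def using A by auto
  have AM: "A - a \<cdot>\<^sub>m 1\<^sub>m n \<in> carrier_mat n n" by (rule minus_carrier_mat) simp
  have "(A - a \<cdot>\<^sub>m 1\<^sub>m n) *\<^sub>v w = A *\<^sub>v w - a \<cdot>\<^sub>v w"
  proof (rule eq_vecI)
    fix i assume "i < dim_vec (A *\<^sub>v w - a \<cdot>\<^sub>v w)"
    hence i: "i < n" using A w(1) by simp
    have "((A - a \<cdot>\<^sub>m 1\<^sub>m n) *\<^sub>v w) $ i = (\<Sum>j<n. A $$ (i,j) * w $ j - (if i = j then a * w $ j else 0))"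
      unfolding mv_index[OF AM w(1) i] using A i by (intro sum.cong) (auto simp: left_diff_distrib)
    also have "\<dots> = (\<Sum>j<n. A $$ (i,j) * w $ j) - a * w $ i"
      using i by (simp add: sum_subtractf)
    finally show "((A - a \<cdot>\<^sub>m 1\<^sub>m n) *\<^sub>v w) $ i = (A *\<^sub>v w - a \<cdot>\<^sub>v w) $ i"
      using i A w(1) by (simp add: mv_index[OF A w(1) i] del: index_mult_mat_vec)
  qed (use A w(1) in simp)
  hence E: "A *\<^sub>v w - a \<cdot>\<^sub>v w = \<mu> \<cdot>\<^sub>v w" using w(3) by simp
  have "A *\<^sub>v w = (\<mu> + a) \<cdot>\<^sub>v w"
  proof (rule eq_vecI)
    fix i assume "i < dim_vec ((\<mu> + a) \<cdot>\<^sub>v w)"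
    hence i: "i < n" using w(1) by simp
    have "(A *\<^sub>v w - a \<cdot>\<^sub>v w) $ i = (\<mu> \<cdot>\<^sub>v w) $ i" using E by simp
    hence "(A *\<^sub>v w) $ i - a * w $ i = \<mu> * w $ i" using i A w(1) by simp
    thus "(A *\<^sub>v w) $ i = ((\<mu> + a) \<cdot>\<^sub>v w) $ i" using i w(1) by (simp add: diff_eq_eq distrib_right)
  qed (use A w(1) in simp)
  thus ?thesis unfolding eigenvalue_def eigenvector_def using w A by auto
qed

section \<open>The real inequality\<close>

lemma final_real:
  fixes h s n1 n2 n3 n4 y2 y3 y4 Gqv :: real
  assumes h0: "0 \<le> h" and n1: "n1 = s"
  and P2: "0 \<le> y2" and G1: "0 \<le> h^2 - n2" and GU: "0 \<le> h^2*n2 - n4" and Gq: "0 \<le> Gqv"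
  and y2: "y2 = n2 - 2*s*n1 + s^2" and y3: "y3 = n3 - 3*s*n2 + 3*s^2*n1 - s^3"
  and y4: "y4 = n4 - 4*s*n3 + 6*s^2*n2 - 4*s^3*n1 + s^4"
  and gq: "Gqv = h^2*n2 - n4 - 4*s*h^2*n1 + 4*s*n3 + 4*s^2*h^2 - 4*s^2*n2"
  shows "y4 \<le> (2*h)^4/12 \<and> y2*y4 - y2^3 - y3^2 \<le> (2*h)^6/432"
proof
  have e1: "y4 = (h^2 - s^2)*(h^2+3*s^2) - Gqv - (h^2+2*s^2)*(h^2 - n2)"
    unfolding y4 gq n1 by (simp add: algebra_simps power2_eq_square power3_eq_cube power4_eq_xxxx)
  have p1: "0 \<le> (h^2+2*s^2)*(h^2 - n2)" using G1 by (intro mult_nonneg_nonneg) simp_all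
  have e1': "(2*h)^4/12 = (h^2 - s^2)*(h^2+3*s^2) + (h^2 - 3*s^2)^2/3"
    by (simp add: field_simps power2_eq_square power3_eq_cube power4_eq_xxxx power_mult_distrib)
  have p1': "0 \<le> (h^2 - 3*s^2)^2/3" by simp
  show "y4 \<le> (2*h)^4/12" using e1 p1 e1' p1' Gq by linarith
next
  have e2: "y2*(n4 - n2^2) - (y2*y4 - y2^3 - y3^2) = (2*s*y2 + y3)^2"
    unfolding y2 y3 y4 n1 by (simp add: algebra_simps power2_eq_square power3_eq_cube power4_eq_xxxx)
  have a1: "y2*y4 - y2^3 - y3^2 \<le> y2*(n4 - n2^2)" using e2 by (simp add: algebra_simps)
  have a2: "y2*(n4 - n2^2) \<le> y2*(n2*(h^2 - n2))"
    using P2 GU by (intro mult_left_mono) (simp_all add: algebra_simps power2_eq_square)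
  have n2y: "n2 = y2 + s^2" unfolding y2 n1 by (simp add: algebra_simps power2_eq_square power3_eq_cube power4_eq_xxxx)
  have n20: "0 \<le> n2" using n2y P2 by simp
  have a3: "y2*(n2*(h^2 - n2)) \<le> n2*(n2*(h^2 - n2))"
    using n2y G1 n20 by (intro mult_right_mono) simp_all
  have h6: "h^6 = h*(h*(h*(h*(h*h))))" by (simp add: numeral_eq_Suc)
  have e4: "(2*h)^6/432 = n2*(n2*(h^2 - n2)) + (n2 - 2*h^2/3)^2 * (n2 + h^2/3)"
    by (simp add: field_simps power2_eq_square power3_eq_cube power4_eq_xxxx power_mult_distrib h6)
  have p4: "0 \<le> (n2 - 2*h^2/3)^2 * (n2 + h^2/3)" using n20 by (intro mult_nonneg_nonneg) simp_all
  show "y2*y4 - y2^3 - y3^2 \<le> (2*h)^6/432" using a1 a2 a3 e4 p4 by linarith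
qed

section \<open>The functional on polynomials\<close>

definition cp :: "real \<Rightarrow> complex poly" where "cp a = [:complex_of_real a:]"

lemma cp_mult: "cp (a * b) = cp a * cp b" by (simp add: cp_def)
lemma cp_add: "cp (a + b) = cp a + cp b" by (simp add: cp_def)
lemma cp_diff: "cp (a - b) = cp a - cp b" by (simp add: cp_def)
lemma cp_power: "cp (a ^ k) = cp a ^ k"
proof (induct k)
  case 0 thus ?case by (simp add: cp_def one_pCons)
next
  case (Suc k) thus ?case by (simp only: power_Suc cp_mult)
qed
lemma cp_numeral: "cp (numeral w) = numeral w" by (simp add: cp_def numeral_poly)
lemma cp_one: "cp 1 = 1" by (simp add: cp_def one_pCons)
lemma realp_cp: "realp (cp a)" unfolding cp_def by (rule realp_const) simp
lemma cp_smult: "cp a * p = Polynomial.smult (complex_of_real a) p" by (simp add: cp_def)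

locale setting =
  fixes n :: nat and \<phi> :: "complex mat \<Rightarrow> complex" and A :: "complex mat"
  assumes phi: "pos_unital_functional n \<phi>" and hA: "hermitian_mat n A"
begin

lemma Ac: "A \<in> carrier_mat n n" using hA herm_carrier by auto

lemma phi_add: "X \<in> carrier_mat n n \<Longrightarrow> Y \<in> carrier_mat n n \<Longrightarrow> \<phi> (X + Y) = \<phi> X + \<phi> Y"
  using phi unfolding pos_unital_functional_def by blast
lemma phi_smult: "X \<in> carrier_mat n n \<Longrightarrow> \<phi> (c \<cdot>\<^sub>m X) = c * \<phi> X"
  using phi unfolding pos_unital_functional_def by blast
lemma phi_psd: "psd_mat n X \<Longrightarrow> 0 \<le> \<phi> X"
  using phi unfolding pos_unital_functional_def by blast
lemma phi_one: "\<phi> (1\<^sub>m n) = 1"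
  using phi unfolding pos_unital_functional_def by blast

definition Lc :: "complex poly \<Rightarrow> complex" where "Lc p = \<phi> (evm n A p)"

lemma Lc_add: "Lc (p + q) = Lc p + Lc q"
  unfolding Lc_def evm_add[OF Ac] by (rule phi_add) (simp_all add: Ac)
lemma Lc_smult: "Lc (Polynomial.smult c p) = c * Lc p"
  unfolding Lc_def evm_smult[OF Ac] by (rule phi_smult) (simp add: Ac)
lemma Lc_diff: "Lc (p - q) = Lc p - Lc q"
proof -
  have "Lc (p - q) = Lc (p + Polynomial.smult (-1) q)" by simp
  also have "\<dots> = Lc p + (-1) * Lc q" by (simp only: Lc_add Lc_smult)
  finally show ?thesis by simp
qed
lemma Lc_one: "Lc 1 = 1" unfolding Lc_def evm_one[OF Ac] by (rule phi_one)

lemma Lc_pos: assumes "realp x" "realp q" "\<And>w. w \<in> carrier_vec n \<Longrightarrow> 0 \<le> ip n w (evm n A x *\<^sub>v w)"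
  shows "0 \<le> Lc (q * x * q)"
  unfolding Lc_def by (rule phi_psd[OF psd_evm[OF hA assms]])

lemma pos_one: "w \<in> carrier_vec n \<Longrightarrow> 0 \<le> ip n w (evm n A 1 *\<^sub>v w)"
  unfolding evm_one[OF Ac] by (simp add: ip_self less_eq_complex_def sum_nonneg)

lemma Lc_sq: "realp q \<Longrightarrow> 0 \<le> Lc (q * q)"
  using Lc_pos[OF realp_one _ pos_one] by simp

lemma Lc_real: assumes rp: "realp p" shows "Lc p = complex_of_real (Re (Lc p))"
proof -
  have e: "Polynomial.smult 4 p = (p + 1) * (p + 1) - (p - 1) * (p - 1)"
    by (simp add: algebra_simps numeral_mult_conv_smult[symmetric])
  have "4 * Lc p = Lc ((p + 1) * (p + 1)) - Lc ((p - 1) * (p - 1))"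
    using arg_cong[OF e, of Lc] by (simp add: Lc_smult Lc_diff)
  moreover have "Im (Lc ((p + 1) * (p + 1))) = 0" "Im (Lc ((p - 1) * (p - 1))) = 0"
    using Lc_sq[OF realp_add[OF rp realp_one]] Lc_sq[OF realp_diff[OF rp realp_one]]
    by (auto simp: less_eq_complex_def)
  ultimately have "Im (4 * Lc p) = 0" by simp
  thus ?thesis by (simp add: complex_eq_iff)
qed

definition L :: "complex poly \<Rightarrow> real" where "L p = Re (Lc p)"

lemma L_add: "L (p + q) = L p + L q" by (simp add: L_def Lc_add)
lemma L_diff: "L (p - q) = L p - L q" by (simp add: L_def Lc_diff)
lemma L_cp_mult: "L (cp a * p) = a * L p" by (simp add: L_def cp_smult Lc_smult)
lemma L_cp: "L (cp a) = a" using L_cp_mult[of a 1] by (simp add: L_def Lc_one)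
lemma L_pos: assumes "realp x" "realp q" "\<And>w. w \<in> carrier_vec n \<Longrightarrow> 0 \<le> ip n w (evm n A x *\<^sub>v w)"
  shows "0 \<le> L (q * x * q)"
  using Lc_pos[OF assms] by (simp add: L_def less_eq_complex_def)
lemma L_sq: "realp q \<Longrightarrow> 0 \<le> L (q * q)"
  using Lc_sq by (simp add: L_def less_eq_complex_def)
lemma Lc_L: "realp p \<Longrightarrow> Lc p = complex_of_real (L p)"
  unfolding L_def by (rule Lc_real)

end


lemma n_pos: assumes "pos_unital_functional n \<phi>" shows "0 < n"
proof (rule ccontr)
  assume "\<not> 0 < n" hence n: "n = 0" by simp
  have c: "(1\<^sub>m 0 :: complex mat) \<in> carrier_mat 0 0" by simp
  have e: "(1\<^sub>m 0 :: complex mat) + 1\<^sub>m 0 = 1\<^sub>m 0" by (rule eq_matI) auto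
  have "\<phi> (1\<^sub>m 0 + 1\<^sub>m 0) = \<phi> (1\<^sub>m 0) + \<phi> (1\<^sub>m 0)"
    using assms n c unfolding pos_unital_functional_def by blast
  hence "\<phi> (1\<^sub>m 0) = \<phi> (1\<^sub>m 0) + \<phi> (1\<^sub>m 0)" using e by simp
  moreover have "\<phi> (1\<^sub>m 0) = 1" using assms n unfolding pos_unital_functional_def by simp
  ultimately show False by simp
qed

theorem theorem3p1:
  fixes n :: nat and \<phi> :: "complex mat \<Rightarrow> complex" and A :: "complex mat"
  assumes "pos_unital_functional n \<phi>"
    and "hermitian_mat n A"
  defines "B \<equiv> A - \<phi> A \<cdot>\<^sub>m 1\<^sub>m n"
  shows "\<phi> (B ^\<^sub>m 4) \<le> complex_of_real (spd A ^ 4 / 12) \<and>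
         \<phi> (B ^\<^sub>m 2) * \<phi> (B ^\<^sub>m 4) - \<phi> (B ^\<^sub>m 2) ^ 3 - \<phi> (B ^\<^sub>m 3) ^ 2
           \<le> complex_of_real (spd A ^ 6 / 432)"
proof -
  interpret setting n \<phi> A using assms(1,2) by unfold_locales
  have n: "0 < n" by (rule n_pos[OF assms(1)])
  define E where "E = spectrum A"
  have finE: "finite E" and neE: "E \<noteq> {}"
    using card_finite_spectrum[OF Ac] spectrum_non_empty[OF Ac n] unfolding E_def by auto
  have Ereal: "\<And>l. l \<in> E \<Longrightarrow> Im l = 0" using eig_real[OF hA] unfolding E_def spectrum_def by auto
  define m0 where "m0 = Min (Re ` E)"
  define M0 where "M0 = Max (Re ` E)"
  have m0E: "m0 \<in> Re ` E" unfolding m0_def using finE neE by (intro Min_in) auto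
  have M0E: "M0 \<in> Re ` E" unfolding M0_def using finE neE by (intro Max_in) auto
  have bnds: "\<And>l. l \<in> E \<Longrightarrow> m0 \<le> Re l \<and> Re l \<le> M0" unfolding m0_def M0_def using finE by auto
  define c where "c = (m0 + M0) / 2"
  define h where "h = (M0 - m0) / 2"
  have h0: "0 \<le> h" using m0E bnds unfolding h_def by force
  have spd_ge: "2 * h \<le> spd A"
  proof -
    obtain l1 where l1: "l1 \<in> E" "Re l1 = M0" using M0E by auto
    obtain l2 where l2: "l2 \<in> E" "Re l2 = m0" using m0E by auto
    have fin: "finite {cmod (l - m) | l m. eigenvalue A l \<and> eigenvalue A m}"
    proof -
      have "{cmod (l - m) | l m. eigenvalue A l \<and> eigenvalue A m} = (\<lambda>(l,m). cmod (l - m)) ` (E \<times> E)"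
        unfolding E_def spectrum_def by auto
      thus ?thesis using finE by simp
    qed
    have "cmod (l1 - l2) \<in> {cmod (l - m) | l m. eigenvalue A l \<and> eigenvalue A m}"
      using l1 l2 unfolding E_def spectrum_def by auto
    hence "cmod (l1 - l2) \<le> spd A" unfolding spd_def using fin by (intro Max_ge)
    moreover have "cmod (l1 - l2) = M0 - m0"
      using Ereal[OF l1(1)] Ereal[OF l2(1)] l1 l2 h0 unfolding h_def by (simp add: cmod_eq_Re)
    ultimately show ?thesis unfolding h_def by simp
  qed
  define X where "X = ([:0,1:] :: complex poly)"
  define U where "U = X - cp c"
  have rX: "realp X" unfolding X_def by (rule realp_X)
  have rU: "realp U" unfolding U_def by (intro realp_diff rX realp_cp)
  have evmU: "evm n A U = A - complex_of_real c \<cdot>\<^sub>m 1\<^sub>m n"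
    unfolding U_def X_def cp_def evm_diff[OF Ac] evm_X[OF Ac] evm_const[OF Ac] ..
  define Z where "Z = evm n A (U * U)"
  have hZ: "hermitian_mat n Z" unfolding Z_def by (rule herm_evm[OF hA realp_mult[OF rU rU]])
  have evZ: "cmod l \<le> h^2" if lZ: "eigenvalue Z l" for l
  proof -
    have "eigenvalue (evm n A U * evm n A U) l" using lZ unfolding Z_def evm_mult[OF Ac] .
    then obtain \<mu> where \<mu>: "eigenvalue (evm n A U) \<mu>" "l = \<mu>^2"
      using eig_sq[OF evm_carrier[OF Ac]] by blast
    have "eigenvalue A (\<mu> + of_real c)" using eig_shift[OF Ac] \<mu>(1) unfolding evmU by blast
    hence lE: "\<mu> + of_real c \<in> E" unfolding E_def spectrum_def by simp
    from Ereal[OF lE] have im\<mu>: "Im \<mu> = 0" by simp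
    from bnds[OF lE] have b1: "m0 \<le> Re \<mu> + c" and b2: "Re \<mu> + c \<le> M0" by auto
    have "Re \<mu> \<le> h" using b2 unfolding h_def c_def by (simp add: field_simps)
    moreover have "- Re \<mu> \<le> h" using b1 unfolding h_def c_def by (simp add: field_simps)
    ultimately have "\<bar>Re \<mu>\<bar> \<le> h" by (simp only: abs_le_iff)
    hence "cmod \<mu> \<le> h" using im\<mu> by (simp add: cmod_eq_Re)
    thus "cmod l \<le> h^2" unfolding \<mu>(2) norm_power by (intro power_mono) auto
  qed
  define x where "x = cp (h^2) - U * U"
  have rx: "realp x" unfolding x_def by (intro realp_diff realp_cp realp_mult rU)
  have posx: "0 \<le> ip n w (evm n A x *\<^sub>v w)" if w: "w \<in> carrier_vec n" for w
  proof -
    have Zc: "Z \<in> carrier_mat n n" unfolding Z_def using Ac by simp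
    have "evm n A x = complex_of_real (h^2) \<cdot>\<^sub>m 1\<^sub>m n - Z"
      unfolding x_def Z_def cp_def evm_diff[OF Ac] evm_const[OF Ac] ..
    hence "evm n A x *\<^sub>v w = (complex_of_real (h^2) \<cdot>\<^sub>m 1\<^sub>m n) *\<^sub>v w - Z *\<^sub>v w"
      using minus_mult_distrib_mat_vec[OF _ Zc w] by simp
    also have "\<dots> = complex_of_real (h^2) \<cdot>\<^sub>v w - Z *\<^sub>v w"
      using smult_mat_vec[OF one_carrier_mat w] w by simp
    finally have "ip n w (evm n A x *\<^sub>v w) = complex_of_real (h^2) * ip n w w - ip n w (Z *\<^sub>v w)"
      using w Zc by (simp add: ip_minus_right ip_smult_right)
    moreover have "Re (ip n w (Z *\<^sub>v w)) \<le> h^2 * Re (ip n w w)" by (rule spec_bound[OF hZ n evZ w])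
    moreover have "Im (ip n w w) = 0" by (simp add: ip_self)
    moreover have "Im (ip n w (Z *\<^sub>v w)) = 0" using herm_qf_real[OF hZ w] by (metis Im_complex_of_real)
    ultimately show ?thesis by (simp add: less_eq_complex_def)
  qed
  define t where "t = L X"
  have phiA: "\<phi> A = complex_of_real t"
    using Lc_L[OF rX] unfolding t_def Lc_def X_def evm_X[OF Ac] by simp
  define s where "s = t - c"
  define y where "y = U - cp s"
  have ry: "realp y" unfolding y_def by (intro realp_diff rU realp_cp)
  have Bdef: "B = evm n A y"
  proof -
    have ye: "y = X - cp t" unfolding y_def U_def s_def cp_diff by simp
    show ?thesis unfolding ye evm_diff[OF Ac] X_def evm_X[OF Ac] cp_def evm_const[OF Ac] B_def phiA ..
  qed
  have phiB: "\<phi> (B ^\<^sub>m k) = complex_of_real (L (y ^ k))" for k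
    using Lc_L[OF realp_power[OF ry]] unfolding Lc_def Bdef evm_power[OF Ac] by simp
  define n1 where "n1 = L U"
  define n2 where "n2 = L (U^2)"
  define n3 where "n3 = L (U^3)"
  define n4 where "n4 = L (U^4)"
  have n1s: "n1 = s" unfolding n1_def U_def s_def t_def by (simp add: L_diff L_cp)
  have py2: "y^2 = U^2 - cp (2*s) * U + cp (s^2)"
    unfolding y_def cp_mult cp_power cp_numeral by (simp add: algebra_simps power2_eq_square)
  have py3: "y^3 = U^3 - cp (3*s) * U^2 + cp (3*s^2) * U - cp (s^3)"
    unfolding y_def cp_mult cp_power cp_numeral by (simp add: algebra_simps power2_eq_square power3_eq_cube)
  have py4: "y^4 = U^4 - cp (4*s) * U^3 + cp (6*s^2) * U^2 - cp (4*s^3) * U + cp (s^4)"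
    unfolding y_def cp_mult cp_power cp_numeral
    by (simp add: algebra_simps power2_eq_square power3_eq_cube power4_eq_xxxx)
  have pG1: "1 * x * 1 = cp (h^2) - U^2" unfolding x_def by (simp add: power2_eq_square)
  have pGU: "U * x * U = cp (h^2) * U^2 - U^4"
    unfolding x_def by (simp add: algebra_simps power2_eq_square power4_eq_xxxx)
  have pGq: "(U - cp (2*s)) * x * (U - cp (2*s)) = cp (h^2) * U^2 - U^4 - cp (4*s*h^2) * U + cp (4*s) * U^3
      + cp (4*s^2*h^2) - cp (4*s^2) * U^2"
    unfolding x_def cp_mult cp_power cp_numeral
    by (simp add: algebra_simps power2_eq_square power3_eq_cube power4_eq_xxxx)
  have Ly2: "L (y^2) = n2 - 2*s*n1 + s^2"
    unfolding py2 n1_def n2_def by (simp only: L_add L_diff L_cp_mult L_cp)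
  have Ly3: "L (y^3) = n3 - 3*s*n2 + 3*s^2*n1 - s^3"
    unfolding py3 n1_def n2_def n3_def by (simp only: L_add L_diff L_cp_mult L_cp)
  have Ly4: "L (y^4) = n4 - 4*s*n3 + 6*s^2*n2 - 4*s^3*n1 + s^4"
    unfolding py4 n1_def n2_def n3_def n4_def by (simp only: L_add L_diff L_cp_mult L_cp)
  have G1: "0 \<le> h^2 - n2"
    using L_pos[OF rx realp_one posx] unfolding pG1 n2_def by (simp only: L_diff L_cp)
  have GU: "0 \<le> h^2*n2 - n4"
    using L_pos[OF rx rU posx] unfolding pGU n2_def n4_def by (simp only: L_diff L_cp_mult)
  have Gq: "0 \<le> h^2*n2 - n4 - 4*s*h^2*n1 + 4*s*n3 + 4*s^2*h^2 - 4*s^2*n2"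
    using L_pos[OF rx realp_diff[OF rU realp_cp[of "2*s"]] posx] unfolding pGq n1_def n2_def n3_def n4_def
    by (simp only: L_add L_diff L_cp_mult L_cp)
  have P2: "0 \<le> L (y^2)" using L_sq[OF ry] by (simp add: power2_eq_square)
  have R: "L (y^4) \<le> (2*h)^4/12 \<and> L (y^2) * L (y^4) - L (y^2)^3 - L (y^3)^2 \<le> (2*h)^6/432"
    by (rule final_real[OF h0 n1s P2 G1 GU Gq Ly2 Ly3 Ly4 refl])
  have sp4: "(2*h)^4 \<le> spd A ^ 4" using spd_ge h0 by (intro power_mono) auto
  have sp6: "(2*h)^6 \<le> spd A ^ 6" using spd_ge h0 by (intro power_mono) auto
  show ?thesis
  proof
    show "\<phi> (B ^\<^sub>m 4) \<le> complex_of_real (spd A ^ 4 / 12)"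
      unfolding phiB using R sp4 by (simp add: less_eq_complex_def)
    show "\<phi> (B ^\<^sub>m 2) * \<phi> (B ^\<^sub>m 4) - \<phi> (B ^\<^sub>m 2) ^ 3 - \<phi> (B ^\<^sub>m 3) ^ 2
           \<le> complex_of_real (spd A ^ 6 / 432)"
      unfolding phiB using R sp6 by (simp add: less_eq_complex_def)
  qed
qed

end
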